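(* With $B_n,P_n$ as in the context, the block lengths $L_n=|B_n|$ grow exponentially in $n$, and the pillar lengths $m_n=|P_n|$ also grow exponentially in $n$.
   Context: Generation operator: for a finite vector $R=\langle r_1,\dots,r_m\rangle$ of positive integers and $s\in\{1,3\}$, $\mathcal{G}(R,s)= s^{r_1}\,(4-s)^{r_2}\,s^{r_3}\cdots$ (the $i$-th run consists of $r_i$ copies of $s$ if $i$ is odd and of $4-s$ if $i$ is even), of length $\sum_i r_i$. For a finite word $W$ over $\{1,3\}$, $R(W)$ denotes $W$ itself regarded as a vector of positive integers. Define $B_1=\mathcal{G}(\langle 1,3,3,3,1\rangle,1)=1\,3\,3\,3\,1\,1\,1\,3\,3\,3\,1$, $P_1=3$, and for $n\ge1$: $B_{n+1}=B_n\,P_n\,B_n$ (concatenation), $P_{n+1}=\mathcal{G}(R(P_n),3)$. "Grows exponentially" means bounded below by $C\gamma^n$ for some constants $C>0$, $\gamma>1$. *)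

theory Defs
  imports Complex_Main
begin

text \<open>Generation operator: gen R s = s^r1 (4-s)^r2 s^r3 ...; words over {1,3} are nat lists.\<close>
fun gen :: "nat list \<Rightarrow> nat \<Rightarrow> nat list" where
  "gen [] s = []"
| "gen (r # rs) s = replicate r s @ gen rs (4 - s)"

definition B1 :: "nat list" where
  "B1 = gen [1,3,3,3,1] 1"

text \<open>Pillars P_n and blocks B_n, indexed from n = 1 (index 0 is an unused dummy).\<close>
fun Pw :: "nat \<Rightarrow> nat list" where
  "Pw 0 = []"
| "Pw (Suc 0) = [3]"
| "Pw (Suc (Suc n)) = gen (Pw (Suc n)) 3"

fun Bw :: "nat \<Rightarrow> nat list" where
  "Bw 0 = []"
| "Bw (Suc 0) = B1"
| "Bw (Suc (Suc n)) = Bw (Suc n) @ Pw (Suc n) @ Bw (Suc n)"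

end

theory Submission
  imports Defs
begin

lemma len_gen: "length (gen R s) = sum_list R"
  by (induction R s rule: gen.induct) auto

lemma set_gen: "s \<in> {1,3} \<Longrightarrow> set R \<subseteq> {1,3} \<Longrightarrow> set (gen R s) \<subseteq> {1,3}"
  by (induction R s rule: gen.induct) auto

lemma cnt_rep: "count_list (replicate r x) y = (if x = y then r else 0)"
  by (induction r) auto

lemma cnt_gen3: "set R \<subseteq> {1,3} \<Longrightarrow> 6 * count_list (gen R 3) 3 \<ge> length (gen R 3)"
proof (induction R rule: induct_list012)
  case 1 then show ?case by simp
next
  case (2 x) then show ?case by (auto simp: cnt_rep)
next
  case (3 x y zs)
  have e: "gen (x # y # zs) 3 = replicate x 3 @ replicate y 1 @ gen zs 3" by simp
  from 3 have "6 * count_list (gen zs 3) 3 \<ge> length (gen zs 3)" by auto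
  moreover from 3 have "x \<ge> 1" "x \<le> 3" "y \<le> 3" by auto
  ultimately show ?case unfolding e by (simp add: cnt_rep)
qed

lemma sum_cnt: "set xs \<subseteq> {1,3} \<Longrightarrow> sum_list xs = length xs + 2 * count_list xs (3::nat)"
  by (induction xs) auto

lemma Pinv: "set (Pw (Suc k)) \<subseteq> {1,3} \<and> 6 * count_list (Pw (Suc k)) 3 \<ge> length (Pw (Suc k))"
proof (induction k)
  case 0 then show ?case by simp
next
  case (Suc k)
  then show ?case using set_gen[of 3 "Pw (Suc k)"] cnt_gen3[of "Pw (Suc k)"] by simp
qed

lemma Pstep: "3 * length (Pw (Suc (Suc k))) \<ge> 4 * length (Pw (Suc k))"
proof -
  have "length (Pw (Suc (Suc k))) = sum_list (Pw (Suc k))" by (simp add: len_gen)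
  also have "\<dots> = length (Pw (Suc k)) + 2 * count_list (Pw (Suc k)) 3"
    using Pinv[of k] sum_cnt by blast
  finally show ?thesis using Pinv[of k] by linarith
qed

lemma Pgrow: "real (length (Pw (Suc k))) \<ge> (4/3) ^ k"
proof (induction k)
  case 0 then show ?case by simp
next
  case (Suc k)
  have "real (3 * length (Pw (Suc (Suc k)))) \<ge> real (4 * length (Pw (Suc k)))"
    using Pstep[of k] by linarith
  then have "real (length (Pw (Suc (Suc k)))) \<ge> 4/3 * real (length (Pw (Suc k)))" by simp
  moreover have "4/3 * real (length (Pw (Suc k))) \<ge> 4/3 * (4/3)^k" using Suc by simp
  ultimately show ?case by simp
qed

lemma Bgrow: "real (length (Bw (Suc k))) \<ge> 2 ^ Suc k"
proof (induction k)
  case 0 then show ?case by (simp add: B1_def numeral_eq_Suc)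
next
  case (Suc k)
  have "length (Bw (Suc (Suc k))) \<ge> 2 * length (Bw (Suc k))" by simp
  then have "real (length (Bw (Suc (Suc k)))) \<ge> 2 * real (length (Bw (Suc k)))" by linarith
  with Suc show ?case by simp
qed

theorem proposition5p2:
  shows "(\<exists>C::real. \<exists>\<gamma>::real. C > 0 \<and> \<gamma> > 1 \<and>
            (\<forall>n\<ge>1. real (length (Bw n)) \<ge> C * \<gamma> ^ n))
       \<and> (\<exists>C::real. \<exists>\<gamma>::real. C > 0 \<and> \<gamma> > 1 \<and>
            (\<forall>n\<ge>1. real (length (Pw n)) \<ge> C * \<gamma> ^ n))"
proof
  show "\<exists>C::real. \<exists>\<gamma>::real. C > 0 \<and> \<gamma> > 1 \<and>
            (\<forall>n\<ge>1. real (length (Bw n)) \<ge> C * \<gamma> ^ n)"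
  proof (intro exI conjI allI impI)
    fix n :: nat assume "n \<ge> 1"
    then obtain k where "n = Suc k" by (cases n) auto
    then show "real (length (Bw n)) \<ge> 1 * 2 ^ n" using Bgrow[of k] by simp
  qed auto
  show "\<exists>C::real. \<exists>\<gamma>::real. C > 0 \<and> \<gamma> > 1 \<and>
            (\<forall>n\<ge>1. real (length (Pw n)) \<ge> C * \<gamma> ^ n)"
  proof (intro exI conjI allI impI)
    fix n :: nat assume "n \<ge> 1"
    then obtain k where "n = Suc k" by (cases n) auto
    then show "real (length (Pw n)) \<ge> 3/4 * (4/3) ^ n" using Pgrow[of k] by simp
  qed auto
qed

end
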